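(* Consider $N\ge 2$ agents $x_i(k+1)=Ax_i(k)+Bu_i(k)$, $i=1,\dots,N$, with $x_i\in\mathbb{R}^n$, $u_i\in\mathbb{R}^m$, where all eigenvalues of $A$ lie in the closed unit disc and $(A,B)$ is stabilizable. Let $K$ be any matrix such that $A-BK$ is Schur stable. Each agent $i$ uses the protocol $$\eta_i(k+1)=A\eta_i(k)+Bu_i(k)+A\zeta_i(k)-A\hat\zeta_i(k),\qquad u_i(k)=-K\eta_i(k),$$ with $\zeta_i(k)=\sum_{j=1}^N d_{ij}(x_i(k)-x_j(k))$ and $\hat\zeta_i(k)=\sum_{j=1}^N d_{ij}(\eta_i(k)-\eta_j(k))$. Then for every $N$, every weighted directed graph on $N$ nodes containing a directed spanning tree, and all initial conditions $x_i(0),\eta_i(0)$, state synchronization holds: $\lim_{k\to\infty}(x_i(k)-x_j(k))=0$ for all $i,j$. In particular, the scalable state synchronization problem with localized information exchange (full-state coupling) is solvable by a protocol designed using only $(A,B)$.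
   Context: The network is a weighted directed graph with adjacency matrix $[a_{ij}]$, $a_{ij}\ge0$, $a_{ii}=0$ ($a_{ij}>0$ means an edge from $j$ to $i$); weighted in-degree $d_{in}(i)=\sum_j a_{ij}$. The row stochastic matrix $D=[d_{ij}]$ is given by $d_{ij}=a_{ij}/(1+d_{in}(i))$ for $j\ne i$ and $d_{ii}=1-\sum_{j\neq i}d_{ij}=1/(1+d_{in}(i))$, so that $\zeta_i=\frac{1}{1+d_{in}(i)}\sum_j a_{ij}(x_i-x_j)$. A square matrix is Schur stable if all its eigenvalues lie in the open unit disc. A directed spanning tree is a subgraph containing all nodes in which every node except one root has exactly one parent. *)

theory Defs
  imports "HOL-Analysis.Analysis"
begin

definition cmat :: "real^'n^'n \<Rightarrow> complex^'n^'n" where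
  "cmat A = (\<chi> i j. complex_of_real (A $ i $ j))"

definition is_eigenvalue :: "real^'n^'n \<Rightarrow> complex \<Rightarrow> bool" where
  "is_eigenvalue A c \<longleftrightarrow> (\<exists>v::complex^'n. v \<noteq> 0 \<and> cmat A *v v = c *s v)"

definition schur_stable :: "real^'n^'n \<Rightarrow> bool" where
  "schur_stable A \<longleftrightarrow> (\<forall>c. is_eigenvalue A c \<longrightarrow> norm c < 1)"

definition eigs_in_closed_disc :: "real^'n^'n \<Rightarrow> bool" where
  "eigs_in_closed_disc A \<longleftrightarrow> (\<forall>c. is_eigenvalue A c \<longrightarrow> norm c \<le> 1)"

definition stabilizable :: "real^'n^'n \<Rightarrow> real^'m^'n \<Rightarrow> bool" where
  "stabilizable A B \<longleftrightarrow> (\<exists>F::real^'n^'m. schur_stable (A + B ** F))"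

text \<open>Graph on nodes {0..<N}, adjacency a i j (edge from j to i if a i j > 0).\<close>
definition weighted_graph :: "nat \<Rightarrow> (nat \<Rightarrow> nat \<Rightarrow> real) \<Rightarrow> bool" where
  "weighted_graph N a \<longleftrightarrow> (\<forall>i<N. \<forall>j<N. a i j \<ge> 0) \<and> (\<forall>i<N. a i i = 0)"

text \<open>Directed spanning tree: a root r and a parent map on all other nodes using
  existing edges (parent j of i means edge j -> i, i.e. a i j > 0) such that following
  parents from any node reaches the root (so the parent structure is a tree).\<close>
definition has_spanning_tree :: "nat \<Rightarrow> (nat \<Rightarrow> nat \<Rightarrow> real) \<Rightarrow> bool" where
  "has_spanning_tree N a \<longleftrightarrow>
     (\<exists>r<N. \<exists>par::nat \<Rightarrow> nat.
        (\<forall>i<N. i \<noteq> r \<longrightarrow> par i < N \<and> par i \<noteq> i \<and> a i (par i) > 0) \<and>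
        (\<forall>i<N. \<exists>k. (par ^^ k) i = r))"

definition din :: "nat \<Rightarrow> (nat \<Rightarrow> nat \<Rightarrow> real) \<Rightarrow> nat \<Rightarrow> real" where
  "din N a i = (\<Sum>j<N. a i j)"

definition dmat :: "nat \<Rightarrow> (nat \<Rightarrow> nat \<Rightarrow> real) \<Rightarrow> nat \<Rightarrow> nat \<Rightarrow> real" where
  "dmat N a i j = (if j = i then 1 / (1 + din N a i) else a i j / (1 + din N a i))"

end

theory Submission
  imports Defs Jordan_Normal_Form.Spectral_Radius
begin
no_notation Matrix.vec_index (infixl \<open>$\<close> 100)


primrec Dp :: "nat \<Rightarrow> (nat \<Rightarrow> nat \<Rightarrow> real) \<Rightarrow> nat \<Rightarrow> nat \<Rightarrow> nat \<Rightarrow> real" where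
  "Dp N a 0 i l = (if i = l then 1 else 0)"
| "Dp N a (Suc k) i l = (\<Sum>j<N. dmat N a i j * Dp N a k j l)"

lemma din_nonneg: "weighted_graph N a \<Longrightarrow> i < N \<Longrightarrow> 0 \<le> din N a i"
  unfolding weighted_graph_def din_def by (auto intro: sum_nonneg)

lemma dmat_nonneg: "weighted_graph N a \<Longrightarrow> i < N \<Longrightarrow> j < N \<Longrightarrow> 0 \<le> dmat N a i j"
  using din_nonneg[of N a i] unfolding dmat_def weighted_graph_def
  by (auto intro!: divide_nonneg_pos)

lemma dmat_rowsum: assumes wg: "weighted_graph N a" and i: "i < N"
  shows "(\<Sum>j<N. dmat N a i j) = 1"
proof -
  have pos: "0 < 1 + din N a i" using din_nonneg[OF wg i] by simp
  have aii: "a i i = 0" using wg i unfolding weighted_graph_def by auto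
  have "(\<Sum>j<N. dmat N a i j) = (\<Sum>j<N. (a i j + (if j = i then 1 else 0)) / (1 + din N a i))"
    unfolding dmat_def by (rule sum.cong) (auto simp: aii)
  also have "\<dots> = (\<Sum>j<N. a i j + (if j = i then 1 else 0)) / (1 + din N a i)"
    by (rule sum_divide_distrib[symmetric])
  also have "(\<Sum>j<N. a i j + (if j = i then 1 else 0)) = din N a i + 1"
    using i by (simp add: sum.distrib din_def)
  finally show ?thesis using pos by simp
qed

lemma Dp_nonneg: "weighted_graph N a \<Longrightarrow> i < N \<Longrightarrow> 0 \<le> Dp N a k i l"
proof (induction k arbitrary: i)
  case 0 then show ?case by simp
next
  case (Suc k)
  then show ?case using dmat_nonneg[OF Suc.prems(1) Suc.prems(2)] by (auto intro!: sum_nonneg)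
qed

lemma Dp_rowsum: "weighted_graph N a \<Longrightarrow> i < N \<Longrightarrow> (\<Sum>l<N. Dp N a k i l) = 1"
proof (induction k arbitrary: i)
  case 0 then show ?case by (simp add: sum.delta)
next
  case (Suc k)
  have "(\<Sum>l<N. Dp N a (Suc k) i l) = (\<Sum>l<N. \<Sum>j<N. dmat N a i j * Dp N a k j l)" by simp
  also have "\<dots> = (\<Sum>j<N. \<Sum>l<N. dmat N a i j * Dp N a k j l)" by (rule sum.swap)
  also have "\<dots> = (\<Sum>j<N. dmat N a i j * (\<Sum>l<N. Dp N a k j l))" by (simp only: sum_distrib_left)
  also have "\<dots> = (\<Sum>j<N. dmat N a i j)" using Suc.IH[OF Suc.prems(1)] by (intro sum.cong) auto
  also have "\<dots> = 1" using dmat_rowsum Suc.prems by blast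
  finally show ?case .
qed

lemma Dp_add: "i < N \<Longrightarrow> Dp N a (m + k) i l = (\<Sum>j<N. Dp N a m i j * Dp N a k j l)"
proof (induction m arbitrary: i)
  case 0
  have "(\<Sum>j<N. Dp N a 0 i j * Dp N a k j l) = (\<Sum>j<N. if i = j then Dp N a k j l else 0)"
    by (rule sum.cong) auto
  then show ?case using 0 by (simp add: sum.delta)
next
  case (Suc m)
  have "Dp N a (Suc m + k) i l = (\<Sum>j<N. dmat N a i j * Dp N a (m + k) j l)" by simp
  also have "\<dots> = (\<Sum>j<N. dmat N a i j * (\<Sum>s<N. Dp N a m j s * Dp N a k s l))"
    using Suc.IH by (intro sum.cong) auto
  also have "\<dots> = (\<Sum>j<N. \<Sum>s<N. dmat N a i j * (Dp N a m j s * Dp N a k s l))"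
    by (simp only: sum_distrib_left)
  also have "\<dots> = (\<Sum>s<N. \<Sum>j<N. dmat N a i j * (Dp N a m j s * Dp N a k s l))" by (rule sum.swap)
  also have "\<dots> = (\<Sum>s<N. (\<Sum>j<N. dmat N a i j * Dp N a m j s) * Dp N a k s l)"
    by (simp only: sum_distrib_right mult.assoc)
  finally show ?case by simp
qed

lemma conv_bounds:
  assumes "\<And>j. j < (N::nat) \<Longrightarrow> 0 \<le> P j" "(\<Sum>j<N. P j) = 1"
    and "\<And>j. j < N \<Longrightarrow> lo \<le> v j \<and> v j \<le> (hi::real)"
  shows "lo \<le> (\<Sum>j<N. P j * v j) \<and> (\<Sum>j<N. P j * v j) \<le> hi"
proof
  have "(\<Sum>j<N. P j * lo) \<le> (\<Sum>j<N. P j * v j)" using assms by (intro sum_mono mult_left_mono) auto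
  then show "lo \<le> (\<Sum>j<N. P j * v j)" using assms(2) by (simp add: sum_distrib_right[symmetric])
  have "(\<Sum>j<N. P j * v j) \<le> (\<Sum>j<N. P j * hi)" using assms by (intro sum_mono mult_left_mono) auto
  then show "(\<Sum>j<N. P j * v j) \<le> hi" using assms(2) by (simp add: sum_distrib_right[symmetric])
qed

lemma contraction:
  assumes P0: "\<And>j. j < (N::nat) \<Longrightarrow> 0 \<le> P j" and P1: "(\<Sum>j<N. P j) = 1" and r: "r < N" and c: "c \<le> P r"
    and v: "\<And>j. j < N \<Longrightarrow> lo \<le> v j \<and> v j \<le> (hi::real)"
  shows "lo + c * (v r - lo) \<le> (\<Sum>j<N. P j * v j) \<and> (\<Sum>j<N. P j * v j) \<le> hi - c * (hi - v r)"
proof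
  have "(\<Sum>j<N. P j * v j) = hi - (\<Sum>j<N. P j * (hi - v j))"
    using P1 by (simp add: right_diff_distrib sum_subtractf sum_distrib_right[symmetric])
  moreover have "P r * (hi - v r) \<le> (\<Sum>j<N. P j * (hi - v j))"
    using r P0 v by (intro member_le_sum[of r "{..<N}"]) (auto intro!: mult_nonneg_nonneg)
  moreover have "c * (hi - v r) \<le> P r * (hi - v r)" using c v[OF r] by (intro mult_right_mono) auto
  ultimately show "(\<Sum>j<N. P j * v j) \<le> hi - c * (hi - v r)" by linarith
  have "(\<Sum>j<N. P j * v j) = lo + (\<Sum>j<N. P j * (v j - lo))"
    using P1 by (simp add: right_diff_distrib sum_subtractf sum_distrib_right[symmetric])
  moreover have "P r * (v r - lo) \<le> (\<Sum>j<N. P j * (v j - lo))"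
    using r P0 v by (intro member_le_sum[of r "{..<N}"]) (auto intro!: mult_nonneg_nonneg)
  moreover have "c * (v r - lo) \<le> P r * (v r - lo)" using c v[OF r] by (intro mult_right_mono) auto
  ultimately show "lo + c * (v r - lo) \<le> (\<Sum>j<N. P j * v j)" by linarith
qed



lemma Dp_le1: "weighted_graph N a \<Longrightarrow> i < N \<Longrightarrow> l < N \<Longrightarrow> Dp N a k i l \<le> 1"
  using member_le_sum[of l "{..<N}" "Dp N a k i"] Dp_nonneg[of N a i k] Dp_rowsum[of N a i k] by auto

lemma root_self:
  assumes wg: "weighted_graph N a" and r: "r < N" and dl: "0 \<le> \<delta>" and hd: "\<delta> \<le> dmat N a r r"
  shows "\<delta>^k \<le> Dp N a k r r"
proof (induction k)
  case 0 then show ?case by simp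
next
  case (Suc k)
  have "dmat N a r r * Dp N a k r r \<le> Dp N a (Suc k) r r"
    using r wg by (simp, intro member_le_sum[of r "{..<N}"]) (auto intro!: mult_nonneg_nonneg dmat_nonneg Dp_nonneg)
  moreover have "\<delta> * \<delta>^k \<le> dmat N a r r * Dp N a k r r"
    using Suc hd dl by (intro mult_mono) auto
  ultimately show ?case by simp
qed

lemma root_reach:
  assumes wg: "weighted_graph N a" and r: "r < N" and dl: "0 \<le> \<delta>"
    and hd: "\<And>i. i < N \<Longrightarrow> \<delta> \<le> dmat N a i i"
    and hp: "\<And>i. i < N \<Longrightarrow> i \<noteq> r \<Longrightarrow> par i < N \<and> \<delta> \<le> dmat N a i (par i)"
  shows "i < N \<Longrightarrow> (par ^^ m) i = r \<Longrightarrow> m \<le> k \<Longrightarrow> \<delta>^k \<le> Dp N a k i r"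
proof (induction m arbitrary: i k)
  case 0 then show ?case using root_self[OF wg r dl hd[OF r]] by simp
next
  case (Suc m)
  show ?case
  proof (cases "i = r")
    case True then show ?thesis using root_self[OF wg r dl hd[OF r]] by simp
  next
    case False
    obtain k' where k: "k = Suc k'" "m \<le> k'" using Suc.prems(3) by (cases k) auto
    have pi: "par i < N" "\<delta> \<le> dmat N a i (par i)" using hp[OF Suc.prems(1) False] by auto
    have "(par ^^ m) (par i) = r" using Suc.prems(2) by (simp add: funpow_Suc_right del: funpow.simps)
    then have IH: "\<delta>^k' \<le> Dp N a k' (par i) r" using Suc.IH[OF pi(1) _ k(2)] by simp
    have "dmat N a i (par i) * Dp N a k' (par i) r \<le> Dp N a (Suc k') i r"
      using pi(1) Suc.prems(1) wg by (simp, intro member_le_sum[of "par i" "{..<N}"]) (auto intro!: mult_nonneg_nonneg dmat_nonneg Dp_nonneg)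
    moreover have "\<delta> * \<delta>^k' \<le> dmat N a i (par i) * Dp N a k' (par i) r"
      using IH pi dl by (intro mult_mono) auto
    ultimately show ?thesis using k by simp
  qed
qed

lemma consensus_rate:
  assumes wg: "weighted_graph N a" and st: "has_spanning_tree N a"
  shows "\<exists>C g. 0 \<le> g \<and> g < 1 \<and> (\<forall>k i j l. i < N \<longrightarrow> j < N \<longrightarrow> l < N \<longrightarrow> \<bar>Dp N a k i l - Dp N a k j l\<bar> \<le> C * g^k)"
proof -
  obtain r par where r: "r < N" and par: "\<And>i. i < N \<Longrightarrow> i \<noteq> r \<Longrightarrow> par i < N \<and> par i \<noteq> i \<and> a i (par i) > 0"
    and reach: "\<And>i. i < N \<Longrightarrow> \<exists>k. (par ^^ k) i = r"
    using st unfolding has_spanning_tree_def by blast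
  define S where "S = (\<lambda>i. dmat N a i i) ` {..<N} \<union> (\<lambda>i. dmat N a i (par i)) ` {i. i < N \<and> i \<noteq> r}"
  have fS: "finite S" by (simp add: S_def)
  have neS: "S \<noteq> {}" using r by (auto simp: S_def)
  have Spos: "\<forall>s\<in>S. 0 < s"
  proof
    fix s assume "s \<in> S"
    then consider i where "i < N" "s = dmat N a i i" | i where "i < N" "i \<noteq> r" "s = dmat N a i (par i)"
      unfolding S_def by auto
    then show "0 < s"
    proof cases
      case 1 then show ?thesis using din_nonneg[OF wg 1(1)] by (simp add: dmat_def)
    next
      case 2 then show ?thesis using din_nonneg[OF wg 2(1)] par[OF 2(1) 2(2)] by (simp add: dmat_def)
    qed
  qed
  define \<delta> where "\<delta> = Min S"
  have dpos: "0 < \<delta>" unfolding \<delta>_def using fS neS Spos by simp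
  have hd: "\<And>i. i < N \<Longrightarrow> \<delta> \<le> dmat N a i i" unfolding \<delta>_def using fS by (auto simp: S_def)
  have hp: "\<And>i. i < N \<Longrightarrow> i \<noteq> r \<Longrightarrow> par i < N \<and> \<delta> \<le> dmat N a i (par i)"
    unfolding \<delta>_def using fS par by (auto simp: S_def)
  obtain mi where mi: "\<And>i. i < N \<Longrightarrow> (par ^^ mi i) i = r" using reach by metis
  define L where "L = Suc (\<Sum>i<N. mi i)"
  have miL: "mi i \<le> L" if "i < N" for i
    using member_le_sum[of i "{..<N}" mi] that by (simp add: L_def)
  have L1: "1 \<le> L" by (simp add: L_def)
  define c where "c = \<delta>^L"
  have cpos: "0 < c" using dpos by (simp add: c_def)
  have cL: "\<And>i. i < N \<Longrightarrow> c \<le> Dp N a L i r"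
    unfolding c_def using root_reach[OF wg r _ hd hp] dpos mi miL by (meson less_imp_le)
  have c1: "c \<le> 1" using order_trans[OF cL[OF r] Dp_le1[OF wg r r]] .
  define q where "q = 1 - c"
  have q: "0 \<le> q" "q < 1" using c1 cpos by (auto simp: q_def)
  have intv: "\<exists>lo hi. hi - lo \<le> q^t \<and> (\<forall>j<N. lo \<le> Dp N a (t*L) j l \<and> Dp N a (t*L) j l \<le> hi)" for t l
  proof (induction t)
    case 0
    have "\<forall>j<N. 0 \<le> Dp N a (0*L) j l \<and> Dp N a (0*L) j l \<le> 1" by simp
    then show ?case by (intro exI[of _ 0] exI[of _ 1]) simp
  next
    case (Suc t)
    then obtain lo hi where lh: "hi - lo \<le> q^t" "\<And>j. j < N \<Longrightarrow> lo \<le> Dp N a (t*L) j l \<and> Dp N a (t*L) j l \<le> hi"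
      by blast
    define v where "v = Dp N a (t*L) r l"
    have new: "lo + c * (v - lo) \<le> Dp N a (Suc t * L) j l \<and> Dp N a (Suc t * L) j l \<le> hi - c * (hi - v)" if j: "j < N" for j
    proof -
      have "Dp N a (Suc t * L) j l = (\<Sum>s<N. Dp N a L j s * Dp N a (t*L) s l)"
        using Dp_add[OF j, of a L "t*L" l] by (simp add: add.commute)
      then show ?thesis unfolding v_def
        using contraction[of N "Dp N a L j" r c lo "\<lambda>s. Dp N a (t*L) s l" hi]
          Dp_nonneg[OF wg j] Dp_rowsum[OF wg j] r cL[OF j] lh(2) by auto
    qed
    have "v \<le> hi" "lo \<le> v" using lh(2)[OF r] by (auto simp: v_def)
    have "(hi - c * (hi - v)) - (lo + c * (v - lo)) = q * (hi - lo)" by (simp add: q_def algebra_simps)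
    also have "\<dots> \<le> q * q^t" using lh(1) q by (simp add: mult_left_mono)
    finally show ?case using new by (intro exI[of _ "lo + c * (v - lo)"] exI[of _ "hi - c * (hi - v)"]) auto
  qed
  have bnd: "\<bar>Dp N a k i l - Dp N a k j l\<bar> \<le> q^(k div L)" if "i < N" "j < N" "l < N" for k i j l
  proof -
    obtain lo hi where lh: "hi - lo \<le> q^(k div L)" "\<And>j. j < N \<Longrightarrow> lo \<le> Dp N a ((k div L)*L) j l \<and> Dp N a ((k div L)*L) j l \<le> hi"
      using intv by blast
    have kk: "k = k mod L + (k div L) * L" by simp
    have inb: "lo \<le> Dp N a k s l \<and> Dp N a k s l \<le> hi" if s: "s < N" for s
    proof -
      have "Dp N a k s l = (\<Sum>t<N. Dp N a (k mod L) s t * Dp N a ((k div L)*L) t l)"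
        using Dp_add[OF s, of a "k mod L" "(k div L)*L" l] kk by simp
      then show ?thesis using conv_bounds[of N "Dp N a (k mod L) s" lo "\<lambda>t. Dp N a ((k div L)*L) t l" hi]
        Dp_nonneg[OF wg s] Dp_rowsum[OF wg s] lh(2) by auto
    qed
    show ?thesis using inb[OF that(1)] inb[OF that(2)] lh(1) by linarith
  qed
  define q' where "q' = max q (1/2)"
  have q': "0 < q'" "q' < 1" "q \<le> q'" using q by (auto simp: q'_def)
  define g where "g = root L q'"
  have g: "0 \<le> g" "g < 1" "g ^ L = q'" using q' L1
    by (auto simp: g_def real_root_pow_pos2 real_root_lt_1_iff)
  have geo: "q^(k div L) \<le> (1/q') * g^k" for k
  proof -
    have a: "q^(k div L) \<le> g^(L * (k div L))" using q q' g by (simp add: power_mono power_mult)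
    have "k < L * (k div L) + L" using L1
      by (metis add.commute div_mult_mod_eq mod_less_divisor mult.commute nat_add_left_cancel_less
              le_less_trans less_one not_less zero_less_Suc Suc_le_eq)
    then have "g^(L * (k div L) + L) \<le> g^k" using g by (intro power_decreasing) auto
    then have b: "g^(L * (k div L)) * q' \<le> g^k" using g by (simp add: power_add)
    have "g^(L * (k div L)) \<le> g^k / q'" using b q' by (simp add: pos_le_divide_eq)
    then show ?thesis using a by simp
  qed
  show ?thesis
    using bnd geo g by (intro exI[of _ "1/q'"] exI[of _ g]) (meson order_trans)
qed



primrec mpow :: "real^'n^'n \<Rightarrow> nat \<Rightarrow> real^'n^'n" where
  "mpow M 0 = Finite_Cartesian_Product.mat 1"
| "mpow M (Suc k) = mpow M k ** M"

lemma mpow_Suc': "mpow M (Suc k) = M ** mpow M k"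
proof (induction k)
  case 0 then show ?case by simp
next
  case (Suc k)
  have "mpow M (Suc (Suc k)) = (M ** mpow M k) ** M" using Suc by simp
  also have "\<dots> = M ** mpow M (Suc k)" by (simp add: matrix_mul_assoc)
  finally show ?case .
qed

definition ix :: "nat \<Rightarrow> 'n::finite" where
  "ix = (SOME h. bij_betw h {..<CARD('n)} (UNIV::'n set))"

lemma ix_bij: "bij_betw (ix::nat\<Rightarrow>'n::finite) {..<CARD('n)} UNIV"
proof -
  have "\<exists>h. bij_betw h {0..<card (UNIV::'n set)} (UNIV::'n set)"
    by (rule ex_bij_betw_nat_finite) simp
  then have "\<exists>h. bij_betw h {..<CARD('n)} (UNIV::'n set)" by (simp add: lessThan_atLeast0)
  then show ?thesis unfolding ix_def by (rule someI_ex)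
qed

definition jx :: "'n::finite \<Rightarrow> nat" where "jx = inv_into {..<CARD('n)} ix"

lemma jx_lt: "jx (a::'n::finite) < CARD('n)"
  using ix_bij[where 'n='n] unfolding jx_def
  by (metis UNIV_I bij_betw_def inv_into_into lessThan_iff)

lemma ix_jx[simp]: "ix (jx (a::'n::finite)) = a"
  using ix_bij[where 'n='n] unfolding jx_def
  by (metis UNIV_I bij_betw_def f_inv_into_f)

lemma jx_ix[simp]: "i < CARD('n::finite) \<Longrightarrow> jx (ix i :: 'n) = i"
  using ix_bij[where 'n='n] unfolding jx_def
  by (meson bij_betw_inv_into_left lessThan_iff)

lemma sum_ix: "sum f (UNIV::'n::finite set) = (\<Sum>i<CARD('n). f (ix i))"
  using sum.reindex_bij_betw[OF ix_bij[where 'n='n], of f] by simp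

definition mat_of :: "real^'n^'n \<Rightarrow> complex mat" where
  "mat_of M = Matrix.mat CARD('n) CARD('n) (\<lambda>(i,j). complex_of_real (M $ ix i $ ix j))"

lemma mat_of_carrier: "mat_of (M::real^'n^'n) \<in> carrier_mat CARD('n) CARD('n)"
  unfolding mat_of_def by simp

lemma mat_of_index: "i < CARD('n) \<Longrightarrow> j < CARD('n) \<Longrightarrow>
   mat_of (M::real^'n^'n) $$ (i,j) = complex_of_real (M $ ix i $ ix j)"
  unfolding mat_of_def by simp

lemma mat_of_mult: "mat_of ((M::real^'n^'n) ** P) = mat_of M * mat_of P"
proof (rule eq_matI)
  fix i j assume i: "i < dim_row (mat_of M * mat_of P)" and j: "j < dim_col (mat_of M * mat_of P)"
  then have i': "i < CARD('n)" and j': "j < CARD('n)" using mat_of_carrier[of M] mat_of_carrier[of P] by auto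
  have "(mat_of M * mat_of P) $$ (i,j) = row (mat_of M) i \<bullet> col (mat_of P) j"
    using i j by simp
  also have "\<dots> = (\<Sum>t<CARD('n). complex_of_real (M $ ix i $ ix t) * complex_of_real (P $ ix t $ ix j))"
    unfolding scalar_prod_def using i' j' mat_of_carrier[of M] mat_of_carrier[of P]
    by (auto simp: mat_of_index lessThan_atLeast0 intro!: sum.cong)
  also have "\<dots> = complex_of_real ((M ** P) $ ix i $ ix j)"
    by (simp add: matrix_matrix_mult_def sum_ix[where f="\<lambda>k. M $ ix i $ k * P $ k $ ix j"])
  also have "\<dots> = mat_of (M ** P) $$ (i,j)" using i' j' by (simp add: mat_of_index)
  finally show "mat_of (M ** P) $$ (i,j) = (mat_of M * mat_of P) $$ (i,j)" by simp
qed (simp_all add: mat_of_def)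

lemma mat_of_one: "mat_of (Finite_Cartesian_Product.mat 1 :: real^'n^'n) = 1\<^sub>m CARD('n)"
proof (rule eq_matI)
  fix i j assume "i < dim_row (1\<^sub>m CARD('n))" "j < dim_col (1\<^sub>m CARD('n))"
  then have i: "i < CARD('n)" and j: "j < CARD('n)" by auto
  have "(ix i = (ix j::'n)) = (i = j)" using i j by (metis jx_ix)
  then show "mat_of (Finite_Cartesian_Product.mat 1 :: real^'n^'n) $$ (i,j) = 1\<^sub>m CARD('n) $$ (i,j)"
    using i j by (simp add: mat_of_index Finite_Cartesian_Product.mat_def)
qed (simp_all add: mat_of_def)

lemma mat_of_pow: "mat_of (mpow (M::real^'n^'n) k) = mat_of M ^\<^sub>m k"
proof (induction k)
  case 0 then show ?case using mat_of_carrier[of M] by (simp add: mat_of_one)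
next
  case (Suc k) then show ?case by (simp add: mat_of_mult)
qed

lemma eig_to_real: assumes "eigenvalue (mat_of (M::real^'n^'n)) c" shows "is_eigenvalue M c"
proof -
  obtain v where v: "v \<in> carrier_vec CARD('n)" "v \<noteq> 0\<^sub>v CARD('n)" "mat_of M *\<^sub>v v = c \<cdot>\<^sub>v v"
    using assms mat_of_carrier[of M] unfolding eigenvalue_def eigenvector_def by auto
  define w :: "complex^'n" where "w = (\<chi> a. vec_index v (jx a))"
  obtain t where t: "t < CARD('n)" "vec_index v t \<noteq> 0"
    using v(1,2) by (metis carrier_vecD eq_vecI index_zero_vec(1) index_zero_vec(2))
  have "w $ ix t \<noteq> 0" using t by (simp add: w_def)
  then have wnz: "w \<noteq> 0" by auto
  have "cmat M *v w = c *s w"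
  proof (subst Finite_Cartesian_Product.vec_eq_iff, intro allI)
    fix a :: 'n
    have "(cmat M *v w) $ a = (\<Sum>t<CARD('n). complex_of_real (M $ a $ ix t) * vec_index v t)"
      by (simp add: matrix_vector_mult_def cmat_def w_def sum_ix[where f="\<lambda>b. complex_of_real (M $ a $ b) * vec_index v (jx b)"]
            cong: sum.cong) (rule sum.cong, auto)
    also have "\<dots> = vec_index (mat_of M *\<^sub>v v) (jx a)"
      using v(1) mat_of_carrier[of M] jx_lt[of a]
      by (auto simp: scalar_prod_def mat_of_index lessThan_atLeast0 intro!: sum.cong)
    also have "\<dots> = c * vec_index v (jx a)" using v(3) v(1) jx_lt[of a] by simp
    finally show "(cmat M *v w) $ a = (c *s w) $ a" by (simp add: w_def)
  qed
  then show ?thesis unfolding is_eigenvalue_def using wnz by blast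
qed

lemma eig_to_mat: assumes "is_eigenvalue (M::real^'n^'n) c" shows "eigenvalue (mat_of M) c"
proof -
  obtain w :: "complex^'n" where w: "w \<noteq> 0" "cmat M *v w = c *s w"
    using assms unfolding is_eigenvalue_def by blast
  define v where "v = Matrix.vec CARD('n) (\<lambda>i. w $ ix i)"
  have vc: "v \<in> carrier_vec CARD('n)" by (simp add: v_def)
  obtain a where a: "w $ a \<noteq> 0" using w(1) by (metis Finite_Cartesian_Product.vec_eq_iff zero_index)
  have "vec_index v (jx a) \<noteq> 0" using a jx_lt[of a] by (simp add: v_def)
  then have vnz: "v \<noteq> 0\<^sub>v CARD('n)" using jx_lt[of a] by auto
  have "mat_of M *\<^sub>v v = c \<cdot>\<^sub>v v"
  proof (rule eq_vecI)
    fix i assume "i < dim_vec (c \<cdot>\<^sub>v v)"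
    then have i: "i < CARD('n)" by (simp add: v_def)
    have "vec_index (mat_of M *\<^sub>v v) i = (\<Sum>t<CARD('n). complex_of_real (M $ ix i $ ix t) * w $ ix t)"
      using i mat_of_carrier[of M]
      by (auto simp: scalar_prod_def mat_of_index lessThan_atLeast0 v_def intro!: sum.cong)
    also have "\<dots> = (cmat M *v w) $ ix i"
      by (simp add: matrix_vector_mult_def cmat_def sum_ix[where f="\<lambda>b. complex_of_real (M $ ix i $ b) * w $ b"])
    also have "\<dots> = c * w $ ix i" using w(2) by simp
    finally show "vec_index (mat_of M *\<^sub>v v) i = vec_index (c \<cdot>\<^sub>v v) i" using i by (simp add: v_def)
  qed (simp add: v_def mat_of_def)
  then show ?thesis unfolding eigenvalue_def eigenvector_def using vc vnz mat_of_carrier[of M] by auto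
qed

lemma eig_finite: "finite {c. is_eigenvalue (M::real^'n^'n) c}"
proof -
  have "{c. is_eigenvalue M c} \<subseteq> spectrum (mat_of M)"
    using eig_to_mat unfolding spectrum_def by auto
  then show ?thesis using card_finite_spectrum(1)[OF mat_of_carrier[of M]] finite_subset by blast
qed

lemma sr_bound: assumes "\<And>c. is_eigenvalue (M::real^'n^'n) c \<Longrightarrow> norm c \<le> r"
  shows "spectral_radius (mat_of M) \<le> r"
proof -
  have "spectral_radius (mat_of M) \<in> norm ` spectrum (mat_of M)"
    by (rule spectral_radius_mem_max(1)[OF mat_of_carrier]) simp
  then obtain c where "eigenvalue (mat_of M) c" "spectral_radius (mat_of M) = norm c"
    unfolding spectrum_def by auto
  then show ?thesis using assms eig_to_real by auto
qed

lemma sr_bound_less: assumes "\<And>c. is_eigenvalue (M::real^'n^'n) c \<Longrightarrow> norm c < r"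
  shows "spectral_radius (mat_of M) < r"
proof -
  have "spectral_radius (mat_of M) \<in> norm ` spectrum (mat_of M)"
    by (rule spectral_radius_mem_max(1)[OF mat_of_carrier]) simp
  then obtain c where "eigenvalue (mat_of M) c" "spectral_radius (mat_of M) = norm c"
    unfolding spectrum_def by auto
  then show ?thesis using assms eig_to_real by auto
qed

lemma mpow_entry: "complex_of_real (mpow (M::real^'n^'n) k $ a $ b) = (mat_of M ^\<^sub>m k) $$ (jx a, jx b)"
  using mat_of_index[of "jx a" "jx b" "mpow M k"] jx_lt[of a] jx_lt[of b] by (simp add: mat_of_pow)

lemma pow_bound_le1: assumes "\<And>c. is_eigenvalue (M::real^'n^'n) c \<Longrightarrow> norm c \<le> 1"
  shows "\<exists>c1 c2 d. \<forall>k a b. \<bar>mpow M k $ a $ b\<bar> \<le> c1 + c2 * real k ^ d"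
proof -
  obtain c1 c2 where cc: "\<forall>k. norm_bound (mat_of M ^\<^sub>m k) (c1 + c2 * of_nat k ^ (CARD('n) - 1))"
    using spectral_radius_jnf_norm_bound_le_1_upper_triangular[OF mat_of_carrier sr_bound[OF assms]] by blast
  have "\<bar>mpow M k $ a $ b\<bar> \<le> c1 + c2 * real k ^ (CARD('n) - 1)" for k a b
  proof -
    have "norm ((mat_of M ^\<^sub>m k) $$ (jx a, jx b)) \<le> c1 + c2 * real k ^ (CARD('n) - 1)"
      using cc jx_lt[of a] jx_lt[of b] mat_of_carrier[of M] unfolding norm_bound_def by auto
    then show ?thesis using mpow_entry[of M k a b, symmetric] by simp
  qed
  then show ?thesis by blast
qed

lemma pow_bound_less1: assumes "\<And>c. is_eigenvalue (M::real^'n^'n) c \<Longrightarrow> norm c < 1"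
  shows "\<exists>C. \<forall>k a b. \<bar>mpow M k $ a $ b\<bar> \<le> C"
proof -
  obtain C where cc: "\<forall>k. norm_bound (mat_of M ^\<^sub>m k) C"
    using spectral_radius_jnf_norm_bound_less_1_upper_triangular[OF mat_of_carrier sr_bound_less[OF assms]] by blast
  have "\<bar>mpow M k $ a $ b\<bar> \<le> C" for k a b
  proof -
    have "norm ((mat_of M ^\<^sub>m k) $$ (jx a, jx b)) \<le> C"
      using cc jx_lt[of a] jx_lt[of b] mat_of_carrier[of M] unfolding norm_bound_def by auto
    then show ?thesis using mpow_entry[of M k a b, symmetric] by simp
  qed
  then show ?thesis by blast
qed



lemma mv_sum: "(M::real^'n^'m) *v sum f S = sum (\<lambda>x. M *v f x) S"
  by (induction S rule: infinite_finite_induct) (auto simp: matrix_vector_right_distrib)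

lemma mpow_scale: "mpow (s *\<^sub>R (M::real^'n^'n)) k = (s^k) *\<^sub>R mpow M k"
proof (induction k)
  case 0 then show ?case by simp
next
  case (Suc k)
  have "mpow (s *\<^sub>R M) (Suc k) = ((s^k) *\<^sub>R mpow M k) ** (s *\<^sub>R M)" using Suc by simp
  also have "\<dots> = (s^Suc k) *\<^sub>R (mpow M k ** M)"
    by (simp add: matrix_scalar_ac scalar_matrix_assoc[symmetric] mult.commute)
  finally show ?case by simp
qed

lemma cmat_scale: "cmat (s *\<^sub>R (M::real^'n^'n)) *v v = complex_of_real s *s (cmat M *v v)"
  by (simp add: Finite_Cartesian_Product.vec_eq_iff matrix_vector_mult_def cmat_def sum_distrib_left mult.assoc)

lemma eig_scale: assumes "is_eigenvalue (s *\<^sub>R (M::real^'n^'n)) c" "s \<noteq> 0"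
  shows "is_eigenvalue M (c / complex_of_real s)"
proof -
  obtain v where v: "v \<noteq> 0" "cmat (s *\<^sub>R M) *v v = c *s v" using assms unfolding is_eigenvalue_def by blast
  have "cmat M *v v = (c / complex_of_real s) *s v"
    using v(2) assms(2) unfolding cmat_scale
    by (simp add: Finite_Cartesian_Product.vec_eq_iff field_simps)
  then show ?thesis using v(1) unfolding is_eigenvalue_def by blast
qed

lemma schur_decay: assumes "schur_stable (F::real^'n^'n)"
  shows "\<exists>C r. 0 < r \<and> r < 1 \<and> (\<forall>k a b. \<bar>mpow F k $ a $ b\<bar> \<le> C * r^k)"
proof -
  define S where "S = insert 0 (norm ` {c. is_eigenvalue F c})"
  have fS: "finite S" using eig_finite[of F] by (simp add: S_def)
  define \<rho> where "\<rho> = Max S"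
  have "\<rho> \<in> S" unfolding \<rho>_def by (rule Max_in[OF fS]) (simp add: S_def)
  then have rho1: "\<rho> < 1" "0 \<le> \<rho>" using assms unfolding S_def schur_stable_def by auto
  have rhoge: "norm c \<le> \<rho>" if "is_eigenvalue F c" for c
    using that fS unfolding \<rho>_def S_def by (simp add: Max_ge)
  define r where "r = (1 + \<rho>) / 2"
  have r: "0 < r" "r < 1" "\<rho> < r" using rho1 by (auto simp: r_def)
  define G where "G = (1/r) *\<^sub>R F"
  have "norm c < 1" if "is_eigenvalue G c" for c
  proof -
    have "is_eigenvalue F (c / complex_of_real (1/r))"
      using eig_scale[of "1/r" F c] that r by (simp add: G_def)
    then have "norm (c / complex_of_real (1/r)) \<le> \<rho>" by (rule rhoge)
    then have "norm c * r \<le> \<rho>" using r by (simp add: norm_divide norm_mult)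
    then show ?thesis using r by (smt (verit, best) mult_less_cancel_right2 norm_ge_zero)
  qed
  then obtain C where C: "\<forall>k a b. \<bar>mpow G k $ a $ b\<bar> \<le> C" using pow_bound_less1 by blast
  have "\<bar>mpow F k $ a $ b\<bar> \<le> C * r^k" for k a b
  proof -
    have "F = r *\<^sub>R G" using r by (simp add: G_def)
    then have "mpow F k = (r^k) *\<^sub>R mpow G k" by (simp add: mpow_scale)
    then have "\<bar>mpow F k $ a $ b\<bar> = r^k * \<bar>mpow G k $ a $ b\<bar>" using r by (simp add: abs_mult)
    also have "\<dots> \<le> r^k * C" using C r by (simp add: mult_left_mono)
    finally show ?thesis by (simp add: mult.commute)
  qed
  then show ?thesis using r by blast
qed

lemma mv_norm_bound: assumes "\<And>a b. \<bar>(M::real^'n^'m) $ a $ b\<bar> \<le> \<beta>"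
  shows "norm (M *v v) \<le> real CARD('m) * real CARD('n) * \<beta> * norm v"
proof -
  have comp: "\<bar>(M *v v) $ a\<bar> \<le> real CARD('n) * \<beta> * norm v" for a
  proof -
    have "\<bar>(M *v v) $ a\<bar> = \<bar>\<Sum>b\<in>UNIV. M $ a $ b * v $ b\<bar>" by (simp add: matrix_vector_mult_def)
    also have "\<dots> \<le> (\<Sum>b\<in>UNIV. \<bar>M $ a $ b * v $ b\<bar>)" by (rule sum_abs)
    also have "\<dots> \<le> (\<Sum>b\<in>(UNIV::'n set). \<beta> * norm v)"
    proof (rule sum_mono)
      fix b :: 'n
      have "\<bar>M $ a $ b * v $ b\<bar> = \<bar>M $ a $ b\<bar> * \<bar>v $ b\<bar>" by (simp add: abs_mult)
      also have "\<dots> \<le> \<beta> * norm v"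
        using assms[of a b] component_le_norm_cart[of v b] by (simp add: mult_mono')
      finally show "\<bar>M $ a $ b * v $ b\<bar> \<le> \<beta> * norm v" .
    qed
    finally show ?thesis by simp
  qed
  have "norm (M *v v) \<le> (\<Sum>a\<in>UNIV. \<bar>(M *v v) $ a\<bar>)" by (rule norm_le_l1_cart)
  also have "\<dots> \<le> (\<Sum>a\<in>(UNIV::'m set). real CARD('n) * \<beta> * norm v)" by (rule sum_mono) (rule comp)
  finally show ?thesis by (simp add: mult.assoc)
qed

lemma poly_geom_limit: assumes "0 \<le> g" "g < 1"
  shows "(\<lambda>k. real k ^ d * g^k) \<longlonglongrightarrow> 0"
proof (cases "d = 0")
  case True then show ?thesis using assms by (simp add: LIMSEQ_power_zero)
next
  case False
  define h where "h = root d g"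
  have h: "0 \<le> h" "h < 1" "h ^ d = g" using assms False
    by (auto simp: h_def real_root_pow_pos2 real_root_lt_1_iff)
  have "(\<lambda>k. real k * h^k) \<longlonglongrightarrow> 0" using powser_times_n_limit_0[of h] h by simp
  then have "(\<lambda>k. (real k * h^k) ^ d) \<longlonglongrightarrow> 0 ^ d" by (rule tendsto_power)
  moreover have "(real k * h^k) ^ d = real k ^ d * g^k" for k
    using h(3) by (simp add: power_mult_distrib power_mult[symmetric] mult.commute[of k d] power_mult)
  ultimately show ?thesis using False by (simp add: zero_power)
qed



lemma mpow_mv_Suc: "F *v (mpow (F::real^'n^'n) j *v v) = mpow F (Suc j) *v v"
  by (simp only: matrix_vector_mul_assoc mpow_Suc')

lemma geom_sum_le: assumes "0 \<le> (r::real)" "r < 1" shows "(\<Sum>s<k. r^s) \<le> 1 / (1 - r)"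
proof -
  have "(\<Sum>s<k. r^s) = (1 - r^k) / (1 - r)" using assms sum_gp_strict[of r k] by simp
  also have "\<dots> \<le> 1 / (1 - r)" using assms by (simp add: divide_right_mono)
  finally show ?thesis .
qed

lemma stable_input:
  fixes F :: "real^'n^'n" and \<delta> w :: "nat \<Rightarrow> real^'n"
  assumes sch: "schur_stable F" and rec: "\<And>k. \<delta> (Suc k) = F *v \<delta> k + w k" and w: "w \<longlonglongrightarrow> 0"
  shows "\<delta> \<longlonglongrightarrow> 0"
proof -
  obtain C r where r: "0 < r" "r < 1" and C: "\<And>k a b. \<bar>mpow F k $ a $ b\<bar> \<le> C * r^k"
    using schur_decay[OF sch] by blast
  define Kc where "Kc = real CARD('n) * real CARD('n) * C"
  have "\<bar>mpow F 0 $ undefined $ undefined\<bar> \<le> C" using C[of 0 undefined undefined] by simp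
  then have "0 \<le> C" by (meson abs_ge_zero order_trans)
  then have Kc0: "0 \<le> Kc" by (simp add: Kc_def)
  have mb: "norm (mpow F j *v v) \<le> Kc * r^j * norm v" for j v
    using mv_norm_bound[of "mpow F j" "C * r^j" v] C by (simp add: Kc_def mult.assoc)
  have form: "\<delta> (k0 + k) = mpow F k *v \<delta> k0 + (\<Sum>t<k. mpow F (k - Suc t) *v w (k0 + t))" for k0 k
  proof (induction k)
    case 0 then show ?case by simp
  next
    case (Suc k)
    have "\<delta> (k0 + Suc k) = F *v \<delta> (k0 + k) + w (k0 + k)" using rec by simp
    also have "\<dots> = mpow F (Suc k) *v \<delta> k0 + (\<Sum>t<k. mpow F (Suc k - Suc t) *v w (k0 + t)) + w (k0 + k)"
      unfolding Suc by (simp add: matrix_vector_right_distrib mv_sum mpow_mv_Suc Suc_diff_Suc)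
    also have "\<dots> = mpow F (Suc k) *v \<delta> k0 + (\<Sum>t<Suc k. mpow F (Suc k - Suc t) *v w (k0 + t))"
      by simp
    finally show ?case .
  qed
  show ?thesis
  proof (rule LIMSEQ_I)
    fix \<epsilon> :: real assume e: "0 < \<epsilon>"
    define Kp where "Kp = Kc + 1"
    have Kp: "0 < Kp" using Kc0 by (simp add: Kp_def)
    define e' where "e' = \<epsilon> * (1 - r) / (2 * Kp)"
    have e': "0 < e'" using e r Kp by (simp add: e'_def)
    obtain k0 where k0: "\<And>t. t \<ge> k0 \<Longrightarrow> norm (w t - 0) < e'" using LIMSEQ_D[OF w e'] by blast
    define B where "B = Kp * norm (\<delta> k0) + 1"
    have B: "0 < B" using Kp by (simp add: B_def add_pos_nonneg[OF zero_less_one] less_le_not_le) (smt (verit) mult_nonneg_nonneg norm_ge_zero)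
    have rk: "(\<lambda>k. r^k) \<longlonglongrightarrow> 0" using r by (simp add: LIMSEQ_power_zero)
    obtain k1 where k1: "\<And>k. k \<ge> k1 \<Longrightarrow> norm (r^k - 0) < \<epsilon> / (2 * B)"
      using LIMSEQ_D[OF rk, of "\<epsilon> / (2 * B)"] e B by auto
    have "norm (\<delta> n - 0) < \<epsilon>" if n: "n \<ge> k0 + k1" for n
    proof -
      define k where "k = n - k0"
      have nk: "n = k0 + k" and kk1: "k \<ge> k1" using n by (auto simp: k_def)
      have t1: "norm (mpow F k *v \<delta> k0) < \<epsilon> / 2"
      proof -
        have "norm (mpow F k *v \<delta> k0) \<le> Kc * r^k * norm (\<delta> k0)" by (rule mb)
        also have "\<dots> \<le> B * r^k" using r Kc0 by (simp add: B_def Kp_def algebra_simps)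
        also have "\<dots> < B * (\<epsilon> / (2 * B))"
        proof -
          have "r^k < \<epsilon> / (2 * B)" using k1[OF kk1] r by simp
          then show ?thesis using B by (rule mult_strict_left_mono)
        qed
        also have "\<dots> = \<epsilon> / 2" using B by simp
        finally show ?thesis .
      qed
      have t2: "norm (\<Sum>t<k. mpow F (k - Suc t) *v w (k0 + t)) \<le> \<epsilon> / 2 * (Kc / Kp)"
      proof -
        have "norm (\<Sum>t<k. mpow F (k - Suc t) *v w (k0 + t)) \<le> (\<Sum>t<k. norm (mpow F (k - Suc t) *v w (k0 + t)))"
          by (rule norm_sum)
        also have "\<dots> \<le> (\<Sum>t<k. Kc * e' * r^(k - Suc t))"
        proof (rule sum_mono)
          fix t assume "t \<in> {..<k}"
          have "norm (mpow F (k - Suc t) *v w (k0 + t)) \<le> Kc * r^(k - Suc t) * norm (w (k0 + t))" by (rule mb)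
          also have "\<dots> \<le> Kc * r^(k - Suc t) * e'"
            using k0[of "k0 + t"] Kc0 r by (intro mult_left_mono) auto
          finally show "norm (mpow F (k - Suc t) *v w (k0 + t)) \<le> Kc * e' * r^(k - Suc t)"
            by (simp add: algebra_simps)
        qed
        also have "\<dots> = Kc * e' * (\<Sum>s<k. r^s)"
          by (simp add: sum_distrib_left[symmetric] sum.nat_diff_reindex[where g="\<lambda>s. r^s"])
        also have "\<dots> \<le> Kc * e' * (1 / (1 - r))"
          using geom_sum_le[of r k] r Kc0 e' by (intro mult_left_mono) auto
        also have "\<dots> = \<epsilon> / 2 * (Kc / Kp)" using r Kp by (simp add: e'_def field_simps)
        finally show ?thesis .
      qed
      have "\<epsilon> / 2 * (Kc / Kp) \<le> \<epsilon> / 2" using Kp Kc0 e by (simp add: Kp_def field_simps)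
      then have "norm (\<delta> n) < \<epsilon>" unfolding nk form
        using t1 t2 norm_triangle_ineq[of "mpow F k *v \<delta> k0" "\<Sum>t<k. mpow F (k - Suc t) *v w (k0 + t)"] by linarith
      then show ?thesis by simp
    qed
    then show "\<exists>no. \<forall>n\<ge>no. norm (\<delta> n - 0) < \<epsilon>" by blast
  qed
qed



lemma aux1: "(c::real) *\<^sub>R (xi - xj) - c *\<^sub>R (ei - ej) = c *\<^sub>R (xi - ei) - c *\<^sub>R ((xj::'a::real_vector) - ej)"
  by (simp add: algebra_simps)

lemma aux2: "(p::'a::ab_group_add) + q - (r + q + s - t) = (p - r) - (s - t)"
  by (simp add: algebra_simps)

lemma aux3: "((a::'a::ab_group_add) - (m - n)) - (b - (p - q)) = ((a - m) - (b - p)) + (n - q)"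
  by (simp add: algebra_simps)

lemma mv_neg: "(M::real^'n^'m) *v (- v) = - (M *v v)"
  using matrix_vector_mult_diff_distrib[of M 0 v] by simp

theorem theorem1:
  fixes A :: "real^'n^'n" and B :: "real^'m^'n" and K :: "real^'n^'m"
    and N :: nat and a :: "nat \<Rightarrow> nat \<Rightarrow> real"
    and x eta :: "nat \<Rightarrow> nat \<Rightarrow> real^'n" and u :: "nat \<Rightarrow> nat \<Rightarrow> real^'m"
  assumes "N \<ge> 2"
    and "eigs_in_closed_disc A"
    and "stabilizable A B"
    and "schur_stable (A - B ** K)"
    and "weighted_graph N a"
    and "has_spanning_tree N a"
    and "\<And>i k. i < N \<Longrightarrow> u i k = - (K *v eta i k)"
    and "\<And>i k. i < N \<Longrightarrow> x i (Suc k) = A *v x i k + B *v u i k"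
    and "\<And>i k. i < N \<Longrightarrow> eta i (Suc k) =
            A *v eta i k + B *v u i k
            + A *v (\<Sum>j<N. dmat N a i j *\<^sub>R (x i k - x j k))
            - A *v (\<Sum>j<N. dmat N a i j *\<^sub>R (eta i k - eta j k))"
  shows "\<forall>i<N. \<forall>j<N. (\<lambda>k. x i k - x j k) \<longlonglongrightarrow> 0"
proof -
  note eig = assms(2) and sch = assms(4) and wg = assms(5) and st = assms(6)
    and urec = assms(7) and xrec = assms(8) and etarec = assms(9)
  define e where "e i k = x i k - eta i k" for i k
  have erec: "e i (Suc k) = A *v (\<Sum>j<N. dmat N a i j *\<^sub>R e j k)" if i: "i < N" for i k
  proof -
    have "(\<Sum>j<N. dmat N a i j *\<^sub>R (x i k - x j k)) - (\<Sum>j<N. dmat N a i j *\<^sub>R (eta i k - eta j k))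
        = (\<Sum>j<N. dmat N a i j *\<^sub>R e i k - dmat N a i j *\<^sub>R e j k)"
      unfolding sum_subtractf[symmetric] e_def by (rule sum.cong) (simp_all only: aux1)
    also have "\<dots> = (\<Sum>j<N. dmat N a i j) *\<^sub>R e i k - (\<Sum>j<N. dmat N a i j *\<^sub>R e j k)"
      by (simp only: sum_subtractf scaleR_sum_left)
    also have "\<dots> = e i k - (\<Sum>j<N. dmat N a i j *\<^sub>R e j k)" using dmat_rowsum[OF wg i] by simp
    finally have S: "(\<Sum>j<N. dmat N a i j *\<^sub>R (x i k - x j k)) - (\<Sum>j<N. dmat N a i j *\<^sub>R (eta i k - eta j k))
        = e i k - (\<Sum>j<N. dmat N a i j *\<^sub>R e j k)" .
    have "e i (Suc k) = A *v (x i k - eta i k) - A *v ((\<Sum>j<N. dmat N a i j *\<^sub>R (x i k - x j k)) - (\<Sum>j<N. dmat N a i j *\<^sub>R (eta i k - eta j k)))"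
      unfolding e_def xrec[OF i] etarec[OF i] by (simp only: aux2 matrix_vector_mult_diff_distrib)
    also have "\<dots> = A *v (\<Sum>j<N. dmat N a i j *\<^sub>R e j k)"
      unfolding S e_def[symmetric] by (simp only: matrix_vector_mult_diff_distrib[symmetric] diff_diff_eq2 add_diff_cancel_left')
    finally show ?thesis .
  qed
  have rep: "e i k = mpow A k *v (\<Sum>l<N. Dp N a k i l *\<^sub>R e l 0)" if "i < N" for i k
    using that
  proof (induction k arbitrary: i)
    case 0
    have "(\<Sum>l<N. Dp N a 0 i l *\<^sub>R e l 0) = (\<Sum>l<N. if i = l then e l 0 else 0)"
      by (rule sum.cong) auto
    then show ?case using 0 by (simp add: sum.delta)
  next
    case (Suc k)
    have "e i (Suc k) = A *v (\<Sum>j<N. dmat N a i j *\<^sub>R (mpow A k *v (\<Sum>l<N. Dp N a k j l *\<^sub>R e l 0)))"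
      unfolding erec[OF Suc.prems] using Suc.IH by simp
    also have "\<dots> = mpow A (Suc k) *v (\<Sum>j<N. dmat N a i j *\<^sub>R (\<Sum>l<N. Dp N a k j l *\<^sub>R e l 0))"
    proof -
      have "(\<Sum>j<N. dmat N a i j *\<^sub>R (mpow A k *v (\<Sum>l<N. Dp N a k j l *\<^sub>R e l 0)))
          = mpow A k *v (\<Sum>j<N. dmat N a i j *\<^sub>R (\<Sum>l<N. Dp N a k j l *\<^sub>R e l 0))"
        by (simp only: mv_sum matrix_vector_mult_scaleR)
      then show ?thesis by (simp only: mpow_mv_Suc)
    qed
    also have "(\<Sum>j<N. dmat N a i j *\<^sub>R (\<Sum>l<N. Dp N a k j l *\<^sub>R e l 0)) = (\<Sum>l<N. Dp N a (Suc k) i l *\<^sub>R e l 0)"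
    proof -
      have "(\<Sum>j<N. dmat N a i j *\<^sub>R (\<Sum>l<N. Dp N a k j l *\<^sub>R e l 0))
          = (\<Sum>j<N. \<Sum>l<N. (dmat N a i j * Dp N a k j l) *\<^sub>R e l 0)"
        by (simp only: scaleR_sum_right scaleR_scaleR)
      also have "\<dots> = (\<Sum>l<N. \<Sum>j<N. (dmat N a i j * Dp N a k j l) *\<^sub>R e l 0)" by (rule sum.swap)
      also have "\<dots> = (\<Sum>l<N. Dp N a (Suc k) i l *\<^sub>R e l 0)"
        by (simp only: scaleR_sum_left[symmetric] Dp.simps)
      finally show ?thesis .
    qed
    finally show ?case .
  qed
  obtain c1 c2 d where pb: "\<And>k a b. \<bar>mpow A k $ a $ b\<bar> \<le> c1 + c2 * real k ^ d"
    using pow_bound_le1[of A] eig unfolding eigs_in_closed_disc_def by blast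
  obtain C g where g: "0 \<le> g" "g < 1" and cr: "\<And>k i j l. i < N \<Longrightarrow> j < N \<Longrightarrow> l < N \<Longrightarrow> \<bar>Dp N a k i l - Dp N a k j l\<bar> \<le> C * g^k"
    using consensus_rate[OF wg st] by blast
  have econv: "(\<lambda>k. e i k - e j k) \<longlonglongrightarrow> 0" if i: "i < N" and j: "j < N" for i j
  proof -
    define E where "E = (\<Sum>l<N. norm (e l 0))"
    define K1 where "K1 = real CARD('n) * real CARD('n)"
    have K1: "0 \<le> K1" by (simp add: K1_def)
    have bd: "norm (e i k - e j k) \<le> K1 * (c1 + c2 * real k ^ d) * (C * g^k * E)" for k
    proof -
      have diff: "e i k - e j k = mpow A k *v (\<Sum>l<N. (Dp N a k i l - Dp N a k j l) *\<^sub>R e l 0)"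
        using rep[OF i, of k] rep[OF j, of k]
        by (simp only: matrix_vector_mult_diff_distrib[symmetric] sum_subtractf[symmetric] scaleR_diff_left[symmetric])
      have nb: "norm (\<Sum>l<N. (Dp N a k i l - Dp N a k j l) *\<^sub>R e l 0) \<le> C * g^k * E"
      proof -
        have "norm (\<Sum>l<N. (Dp N a k i l - Dp N a k j l) *\<^sub>R e l 0) \<le> (\<Sum>l<N. norm ((Dp N a k i l - Dp N a k j l) *\<^sub>R e l 0))"
          by (rule norm_sum)
        also have "\<dots> \<le> (\<Sum>l<N. C * g^k * norm (e l 0))"
          using cr[OF i j] by (intro sum_mono) (auto intro!: mult_right_mono)
        also have "\<dots> = C * g^k * E" by (simp add: E_def sum_distrib_left)
        finally show ?thesis .
      qed
      have c0: "0 \<le> c1 + c2 * real k ^ d" using pb[of k undefined undefined] by (meson abs_ge_zero order_trans)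
      have "norm (e i k - e j k) \<le> K1 * (c1 + c2 * real k ^ d) * norm (\<Sum>l<N. (Dp N a k i l - Dp N a k j l) *\<^sub>R e l 0)"
        unfolding diff K1_def by (rule mv_norm_bound) (rule pb)
      also have "\<dots> \<le> K1 * (c1 + c2 * real k ^ d) * (C * g^k * E)"
        using nb K1 c0 by (intro mult_left_mono) auto
      finally show ?thesis .
    qed
    have eq: "K1 * (c1 + c2 * real k ^ d) * (C * g^k * E) = (K1 * C * E * c1) * g^k + (K1 * C * E * c2) * (real k ^ d * g^k)" for k
      by (simp add: algebra_simps)
    have lim: "(\<lambda>k. (K1 * C * E * c1) * g^k + (K1 * C * E * c2) * (real k ^ d * g^k)) \<longlonglongrightarrow> 0"
    proof -
      have "(\<lambda>k. g^k) \<longlonglongrightarrow> 0" using g by (simp add: LIMSEQ_power_zero)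
      moreover have "(\<lambda>k. real k ^ d * g^k) \<longlonglongrightarrow> 0" using poly_geom_limit[OF g] .
      ultimately show ?thesis using tendsto_add[OF tendsto_mult_right_zero tendsto_mult_right_zero] by fastforce
    qed
    show ?thesis
      by (rule Lim_null_comparison[OF _ lim]) (use bd eq in auto)
  qed
  show ?thesis
  proof (intro allI impI)
    fix i j assume i: "i < N" and j: "j < N"
    define F where "F = A - B ** K"
    define w where "w k = (B ** K) *v (e i k - e j k)" for k
    have drec: "x i (Suc k) - x j (Suc k) = F *v (x i k - x j k) + w k" for k
    proof -
      have xs: "x l (Suc k) = A *v x l k - (B ** K) *v (x l k - e l k)" if "l < N" for l
      proof -
        have "x l k - e l k = eta l k" by (simp add: e_def)
        then show ?thesis unfolding xrec[OF that] urec[OF that]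
          by (simp only: mv_neg matrix_vector_mul_assoc diff_conv_add_uminus)
      qed
      show ?thesis unfolding xs[OF i] xs[OF j] F_def w_def
        by (simp only: matrix_vector_mult_diff_rdistrib matrix_vector_mult_diff_distrib aux3)
    qed
    have bl: "bounded_linear (\<lambda>v. (B ** K) *v v)"
      using matrix_vector_mul_linear linear_conv_bounded_linear by blast
    have wl: "w \<longlonglongrightarrow> 0" unfolding w_def using bounded_linear.tendsto_zero[OF bl econv[OF i j]] .
    show "(\<lambda>k. x i k - x j k) \<longlonglongrightarrow> 0"
      by (rule stable_input[OF sch[folded F_def] _ wl]) (rule drec)
  qed
qed


end
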